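(* Let $\kappa$ be an uncountable regular cardinal and suppose $2^\omega>\kappa$. Then there is a subset of $\kappa^\kappa$ which is open (in the usual topology) and $\kappa$-Borel but not $\kappa$-open.
   Context: The usual topology on $\kappa^\kappa$ is generated by the sets $N_\eta=\{\zeta\in\kappa^\kappa\mid\eta\subseteq\zeta\}$, $\eta:\alpha\to\kappa$, $\alpha<\kappa$. Basic $\kappa$-open sets are the sets $N_\eta=\{\zeta\in\kappa^\kappa\mid\eta\subseteq\zeta\}$ where $\eta:X\to\kappa$ with $X\subseteq\kappa$, $|X|<\kappa$, together with $\emptyset$. A set is $\kappa$-open if it is a union of at most $\kappa$ basic $\kappa$-open sets. The $\kappa$-Borel sets form the smallest class containing the basic $\kappa$-open sets and closed under complements, unions of at most $\kappa$ sets and intersections of at most $\kappa$ sets. *)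

theory Defs
  imports Main
begin

text \<open>The cardinal kappa is represented by a cardinal order r on the whole type 'k
  (so Field r = UNIV and the elements of 'k are the ordinals below kappa).\<close>

definition Nbhd :: "'k set \<Rightarrow> ('k \<Rightarrow> 'k) \<Rightarrow> ('k \<Rightarrow> 'k) set" where
  "Nbhd X \<eta> = {\<zeta>. \<forall>x\<in>X. \<zeta> x = \<eta> x}"

definition usual_open :: "'k rel \<Rightarrow> ('k \<Rightarrow> 'k) set \<Rightarrow> bool" where
  "usual_open r U \<longleftrightarrow>
     (\<exists>S. S \<subseteq> {Nbhd (underS r a) \<eta> | a \<eta>. True} \<and> U = \<Union>S)"

definition basic_kopen :: "'k rel \<Rightarrow> ('k \<Rightarrow> 'k) set \<Rightarrow> bool" where
  "basic_kopen r B \<longleftrightarrow> B = {} \<or> (\<exists>X \<eta>. (card_of X, r) \<in> ordLess \<and> B = Nbhd X \<eta>)"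

definition kappa_open :: "'k rel \<Rightarrow> ('k \<Rightarrow> 'k) set \<Rightarrow> bool" where
  "kappa_open r U \<longleftrightarrow>
     (\<exists>S. S \<subseteq> Collect (basic_kopen r) \<and> (card_of S, r) \<in> ordLeq \<and> U = \<Union>S)"

inductive kappa_borel :: "'k rel \<Rightarrow> ('k \<Rightarrow> 'k) set \<Rightarrow> bool" for r where
  basic: "basic_kopen r B \<Longrightarrow> kappa_borel r B"
| compl: "kappa_borel r A \<Longrightarrow> kappa_borel r (- A)"
| union: "(\<And>A. A \<in> S \<Longrightarrow> kappa_borel r A) \<Longrightarrow> (card_of S, r) \<in> ordLeq \<Longrightarrow> kappa_borel r (\<Union>S)"
| inter: "(\<And>A. A \<in> S \<Longrightarrow> kappa_borel r A) \<Longrightarrow> (card_of S, r) \<in> ordLeq \<Longrightarrow> kappa_borel r (\<Inter>S)"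

end

theory Submission
  imports Defs
begin

lemma exists_infinite_underS:
  fixes r :: "'k rel"
  assumes co: "card_order r" and nl: "(natLeq, r) \<in> ordLess"
  shows "\<exists>a. infinite (underS r a)"
proof (rule ccontr)
  assume "\<not> (\<exists>a. infinite (underS r a))"
  hence fin: "\<And>a. finite (underS r a)" by blast
  have wo: "well_order_on UNIV r" using co unfolding card_order_on_def by blast
  hence lin: "linear_order_on UNIV r" and wf: "wf (r - Id)"
    unfolding well_order_on_def by auto
  hence tot: "total_on UNIV r" and tr: "trans r" and an: "antisym r"
    unfolding linear_order_on_def partial_order_on_def preorder_on_def by auto
  have key: "card (underS r a) < card (underS r b)" if "(a,b) \<in> r" "a \<noteq> b" for a b
  proof -
    have "underS r a \<subseteq> underS r b"
      using that tr an unfolding underS_def trans_def antisym_def by blast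
    moreover have "a \<in> underS r b" "a \<notin> underS r a" using that unfolding underS_def by auto
    ultimately have "underS r a \<subset> underS r b" by blast
    thus ?thesis using fin psubset_card_mono by blast
  qed
  have "inj (\<lambda>a. card (underS r a))"
  proof (rule injI)
    fix a b assume e: "card (underS r a) = card (underS r b)"
    show "a = b"
    proof (rule ccontr)
      assume "a \<noteq> b"
      hence "(a,b) \<in> r \<or> (b,a) \<in> r" using tot unfolding total_on_def by blast
      thus False using key e \<open>a \<noteq> b\<close> by (metis less_irrefl)
    qed
  qed
  hence "(card_of (UNIV::'k set), card_of (UNIV::nat set)) \<in> ordLeq" using card_of_ordLeq by blast
  moreover have "(r, card_of (UNIV::'k set)) \<in> ordIso" using co card_of_unique by blast
  ultimately have "(r, natLeq) \<in> ordLeq" using card_of_nat ordIso_ordLeq_trans ordLeq_ordIso_trans by blast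
  thus False using nl not_ordLess_ordLeq by blast
qed

theorem proposition2p4:
  fixes r :: "'k rel"
  assumes "card_order r"
    and "(natLeq, r) \<in> ordLess"
    and "regularCard r"
    and "(r, card_of (UNIV :: nat set set)) \<in> ordLess"
  shows "\<exists>U :: ('k \<Rightarrow> 'k) set. usual_open r U \<and> kappa_borel r U \<and> \<not> kappa_open r U"
proof -
  note co = assms(1) and nl = assms(2) and big = assms(4)
  obtain a where ia: "infinite (underS r a)" using exists_infinite_underS[OF co nl] by blast
  define D where "D = underS r a"
  obtain g :: "nat \<Rightarrow> 'k" where g: "inj g" "range g \<subseteq> D"
    using infinite_countable_subset[OF ia] unfolding D_def by (elim exE conjE) simp
  have infU: "infinite (UNIV :: 'k set)"
  proof
    assume "finite (UNIV :: 'k set)"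
    hence "finite (underS r a)" by (rule finite_subset[rotated]) simp
    thus False using ia by simp
  qed
  obtain h :: "nat \<Rightarrow> 'k" where h: "inj h"
    using infinite_countable_subset[OF infU] by (elim exE conjE) simp
  define c0 where "c0 = h 0"
  define c1 where "c1 = h 1"
  define c2 where "c2 = h 2"
  have c: "c0 \<noteq> c1" "c2 \<noteq> c0" "c2 \<noteq> c1" unfolding c0_def c1_def c2_def
    using injD[OF h, of 0 1] injD[OF h, of 2 0] injD[OF h, of 2 1] by auto
  have rUNIV: "(r, card_of (UNIV::'k set)) \<in> ordIso" using co card_of_unique by blast
  define U where "U = {\<zeta>::'k\<Rightarrow>'k. \<forall>x\<in>D. \<zeta> x \<in> {c0, c1}}"
  have fin_less: "(card_of X, r) \<in> ordLess" if "finite X" for X :: "'a set"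
  proof -
    have "(card_of X, natLeq) \<in> ordLess" using that finite_iff_ordLess_natLeq by blast
    thus ?thesis using nl ordLess_transitive by blast
  qed
  have "usual_open r U"
    unfolding usual_open_def
  proof (intro exI conjI)
    show "{Nbhd D \<eta> | \<eta>. \<forall>x\<in>D. \<eta> x \<in> {c0,c1}} \<subseteq> {Nbhd (underS r a) \<eta> | a \<eta>. True}"
      unfolding D_def by blast
    show "U = \<Union>{Nbhd D \<eta> | \<eta>. \<forall>x\<in>D. \<eta> x \<in> {c0,c1}}"
      unfolding U_def Nbhd_def by auto
  qed
  moreover have "kappa_borel r U"
  proof -
    define P where "P x = Nbhd {x} (\<lambda>_. c0) \<union> Nbhd {x} (\<lambda>_. c1)" for x
    have "U = \<Inter>(P ` D)" unfolding U_def P_def Nbhd_def by auto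
    moreover have "kappa_borel r (\<Inter>(P ` D))"
    proof (rule kappa_borel.inter)
      fix A assume "A \<in> P ` D"
      then obtain x where A: "A = \<Union>{Nbhd {x} (\<lambda>_. c0), Nbhd {x} (\<lambda>_. c1)}" unfolding P_def by auto
      show "kappa_borel r A" unfolding A
      proof (rule kappa_borel.union)
        fix B assume "B \<in> {Nbhd {x} (\<lambda>_. c0), Nbhd {x} (\<lambda>_. c1)}"
        hence "\<exists>\<eta>. B = Nbhd {x} \<eta>" by blast
        moreover have "(card_of {x}, r) \<in> ordLess" using fin_less[of "{x}"] by simp
        ultimately have "basic_kopen r B" unfolding basic_kopen_def by blast
        thus "kappa_borel r B" by (rule kappa_borel.basic)
      next
        show "(card_of {Nbhd {x} (\<lambda>_. c0), Nbhd {x} (\<lambda>_. c1)}, r) \<in> ordLeq"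
          using ordLess_imp_ordLeq[OF fin_less[of "{Nbhd {x} (\<lambda>_. c0), Nbhd {x} (\<lambda>_. c1)}"]] by simp
      qed
    next
      have "(card_of (P ` D), card_of D) \<in> ordLeq" by (rule card_of_image)
      moreover have "(card_of D, card_of (UNIV::'k set)) \<in> ordLeq" by (rule card_of_mono1) simp
      ultimately show "(card_of (P ` D), r) \<in> ordLeq"
        using rUNIV ordLeq_transitive ordIso_symmetric ordLeq_ordIso_trans by blast
    qed
    ultimately show ?thesis by simp
  qed
  moreover have "\<not> kappa_open r U"
  proof
    assume "kappa_open r U"
    then obtain S where S: "S \<subseteq> Collect (basic_kopen r)" "(card_of S, r) \<in> ordLeq" "U = \<Union>S"
      unfolding kappa_open_def by blast
    define z where "z A = (\<lambda>x. if x \<in> g ` A then c1 else c0)" for A :: "nat set"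
    have zU: "z A \<in> U" for A unfolding z_def U_def by auto
    define B where "B A = (SOME B. B \<in> S \<and> z A \<in> B)" for A
    have BS: "B A \<in> S \<and> z A \<in> B A" for A
    proof -
      have "\<exists>B. B \<in> S \<and> z A \<in> B" using zU[of A] S(3) by blast
      thus ?thesis unfolding B_def by (rule someI_ex)
    qed
    have "inj B"
    proof (rule injI)
      fix A A' assume e: "B A = B A'"
      have "basic_kopen r (B A)" using BS S(1) by blast
      moreover have "B A \<noteq> {}" using BS by blast
      ultimately obtain X \<eta> where X: "B A = Nbhd X \<eta>" unfolding basic_kopen_def by blast
      have DX: "D \<subseteq> X"
      proof
        fix x assume "x \<in> D"
        show "x \<in> X"
        proof (rule ccontr)
          assume "x \<notin> X"
          have "(z A)(x := c2) \<in> B A" using BS[of A] X \<open>x \<notin> X\<close> unfolding Nbhd_def by auto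
          hence "(z A)(x := c2) \<in> U" using S(3) BS[of A] by blast
          thus False using \<open>x \<in> D\<close> c unfolding U_def by auto
        qed
      qed
      have "z A y = z A' y" if "y \<in> D" for y
      proof -
        have "z A \<in> Nbhd X \<eta>" "z A' \<in> Nbhd X \<eta>" using BS[of A] BS[of A'] e X by auto
        moreover have "y \<in> X" using DX that by blast
        ultimately show ?thesis unfolding Nbhd_def by simp
      qed
      hence "z A (g n) = z A' (g n)" for n using g(2) by blast
      show "A = A'"
      proof (rule set_eqI)
        fix n
        have "(g n \<in> g ` A) = (n \<in> A)" "(g n \<in> g ` A') = (n \<in> A')"
          using inj_image_mem_iff[OF g(1)] by auto
        thus "(n \<in> A) = (n \<in> A')" using \<open>z A (g n) = z A' (g n)\<close> c unfolding z_def by auto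
      qed
    qed
    moreover have "range B \<subseteq> S" using BS by auto
    ultimately have "(card_of (UNIV::nat set set), card_of S) \<in> ordLeq" using card_of_ordLeq by blast
    hence "(card_of (UNIV::nat set set), r) \<in> ordLeq" using S(2) ordLeq_transitive by blast
    thus False using big not_ordLess_ordLeq by blast
  qed
  ultimately show ?thesis by blast
qed

end
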